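(* Let $p_1,\ldots,p_m\in[0,1]$ and $\alpha\in[0,1]$, and let $h=h_\alpha$, $d_\alpha$, $z=z_\alpha$, $Z=Z_\alpha$ and $B=B_\alpha$ be as in the context. Then: (1) $d_\alpha(S)=d_\alpha(S\cap Z)$ for all $S\subseteq\{1,\ldots,m\}$; (2) $Z$ is minimal, i.e. if $Y\subseteq\{1,\ldots,m\}$ satisfies $d_\alpha(S)=d_\alpha(S\cap Y)$ for all $S\subseteq\{1,\ldots,m\}$, then $Z\subseteq Y$; (3) $d_\alpha(Z)=m-h$; (4) $Z\subseteq B$.
   Context: Setting: $m$ hypotheses with $p$-values $p_1,\ldots,p_m\in[0,1]$; let $r_1,\ldots,r_m$ be a permutation of $1,\ldots,m$ with $p_{r_1}\le\cdots\le p_{r_m}$, write $p_{(i)}=p_{r_i}$, $L_i=\{r_1,\ldots,r_i\}$ and $K_i=\{r_{m-i+1},\ldots,r_m\}$ for $0\le i\le m$. For $I\subseteq\{1,\ldots,m\}$, $p_{(i:I)}$ is the $i$-th smallest of $\{p_j:j\in I\}$. Simes local test: $I\in\mathcal{U}_\alpha$ iff there is $1\le i\le|I|$ with $|I|p_{(i:I)}\le i\alpha$. Closed testing: $\mathcal{X}_\alpha=\{I: J\in\mathcal{U}_\alpha\ \forall J\supseteq I\}$. For $S\subseteq\{1,\ldots,m\}$: $t_\alpha(S)=\max\{|I|: I\subseteq S, I\notin\mathcal{X}_\alpha\}$, $d_\alpha(S)=|S|-t_\alpha(S)$. $h_\alpha=\max\{0\le i\le m: K_i\notin\mathcal{U}_\alpha\}$.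 $z_\alpha=0$ if $h_\alpha=m$ and otherwise $z_\alpha=\min\{m-h_\alpha\le i\le m: h_\alpha p_{(i)}\le(i-m+h_\alpha+1)\alpha\}$; $Z_\alpha=L_{z_\alpha}$. Benjamini–Hochberg: $b_\alpha=\max\{1\le i\le m: m p_{(i)}\le i\alpha\}$ ($b_\alpha=0$ if no such $i$), $B_\alpha=L_{b_\alpha}$. *)

theory Defs
  imports Complex_Main
begin

definition sorting_perm :: "(nat \<Rightarrow> real) \<Rightarrow> nat \<Rightarrow> (nat \<Rightarrow> nat) \<Rightarrow> bool" where
  "sorting_perm p m r \<longleftrightarrow> bij_betw r {1..m} {1..m} \<and>
     (\<forall>i j. 1 \<le> i \<longrightarrow> i \<le> j \<longrightarrow> j \<le> m \<longrightarrow> p (r i) \<le> p (r j))"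

(* p_(i:I): the i-th smallest (1-based) of {p j : j \<in> I}, with multiplicity *)
definition pord :: "(nat \<Rightarrow> real) \<Rightarrow> nat set \<Rightarrow> nat \<Rightarrow> real" where
  "pord p I i = sort (map p (sorted_list_of_set I)) ! (i - 1)"

(* Simes local test: acceptance region U_alpha (sets of hypotheses rejected by Simes) *)
definition simesU :: "(nat \<Rightarrow> real) \<Rightarrow> nat \<Rightarrow> real \<Rightarrow> nat set set" where
  "simesU p m \<alpha> = {I. I \<subseteq> {1..m} \<and>
     (\<exists>i\<in>{1..card I}. real (card I) * pord p I i \<le> real i * \<alpha>)}"

definition closedX :: "(nat \<Rightarrow> real) \<Rightarrow> nat \<Rightarrow> real \<Rightarrow> nat set set" where
  "closedX p m \<alpha> = {I. I \<subseteq> {1..m} \<and>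
     (\<forall>J. I \<subseteq> J \<and> J \<subseteq> {1..m} \<longrightarrow> J \<in> simesU p m \<alpha>)}"

definition t_alpha :: "(nat \<Rightarrow> real) \<Rightarrow> nat \<Rightarrow> real \<Rightarrow> nat set \<Rightarrow> nat" where
  "t_alpha p m \<alpha> S = Max {card I | I. I \<subseteq> S \<and> I \<notin> closedX p m \<alpha>}"

definition d_alpha :: "(nat \<Rightarrow> real) \<Rightarrow> nat \<Rightarrow> real \<Rightarrow> nat set \<Rightarrow> nat" where
  "d_alpha p m \<alpha> S = card S - t_alpha p m \<alpha> S"

definition Lset :: "(nat \<Rightarrow> nat) \<Rightarrow> nat \<Rightarrow> nat set" where
  "Lset r i = r ` {1..i}"

definition Kset :: "(nat \<Rightarrow> nat) \<Rightarrow> nat \<Rightarrow> nat \<Rightarrow> nat set" where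
  "Kset r m i = r ` {m - i + 1..m}"

definition h_alpha :: "(nat \<Rightarrow> real) \<Rightarrow> nat \<Rightarrow> real \<Rightarrow> (nat \<Rightarrow> nat) \<Rightarrow> nat" where
  "h_alpha p m \<alpha> r = Max {i. i \<le> m \<and> Kset r m i \<notin> simesU p m \<alpha>}"

definition z_alpha :: "(nat \<Rightarrow> real) \<Rightarrow> nat \<Rightarrow> real \<Rightarrow> (nat \<Rightarrow> nat) \<Rightarrow> nat" where
  "z_alpha p m \<alpha> r = (let h = h_alpha p m \<alpha> r in
     if h = m then 0
     else Min {i. m - h \<le> i \<and> i \<le> m \<and>
                  real h * p (r i) \<le> (real i - real m + real h + 1) * \<alpha>})"

definition Z_alpha :: "(nat \<Rightarrow> real) \<Rightarrow> nat \<Rightarrow> real \<Rightarrow> (nat \<Rightarrow> nat) \<Rightarrow> nat set" where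
  "Z_alpha p m \<alpha> r = Lset r (z_alpha p m \<alpha> r)"

definition b_alpha :: "(nat \<Rightarrow> real) \<Rightarrow> nat \<Rightarrow> real \<Rightarrow> (nat \<Rightarrow> nat) \<Rightarrow> nat" where
  "b_alpha p m \<alpha> r = Max (insert 0 {i. 1 \<le> i \<and> i \<le> m \<and> real m * p (r i) \<le> real i * \<alpha>})"

definition B_alpha :: "(nat \<Rightarrow> real) \<Rightarrow> nat \<Rightarrow> real \<Rightarrow> (nat \<Rightarrow> nat) \<Rightarrow> nat set" where
  "B_alpha p m \<alpha> r = Lset r (b_alpha p m \<alpha> r)"

end

theory Submission
  imports Defs
begin


lemma sorted_nth_le_iff:
  fixes xs :: "real list"
  assumes "sorted xs" "1 \<le> i" "i \<le> length xs"
  shows "xs ! (i - 1) \<le> c \<longleftrightarrow> i \<le> length (filter (\<lambda>v. v \<le> c) xs)"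
proof
  assume h: "xs ! (i - 1) \<le> c"
  have "{0..<i} \<subseteq> {j. j < length xs \<and> xs ! j \<le> c}"
  proof
    fix j assume "j \<in> {0..<i}"
    then have "j \<le> i - 1" "i - 1 < length xs" using assms by auto
    then have "xs ! j \<le> xs ! (i - 1)" using assms(1) by (simp add: sorted_iff_nth_mono)
    then show "j \<in> {j. j < length xs \<and> xs ! j \<le> c}" using h \<open>j \<le> i - 1\<close> \<open>i - 1 < length xs\<close> by auto
  qed
  then have "card {0..<i} \<le> card {j. j < length xs \<and> xs ! j \<le> c}"
    by (intro card_mono) auto
  then show "i \<le> length (filter (\<lambda>v. v \<le> c) xs)" by (simp add: length_filter_conv_card)
next
  assume h: "i \<le> length (filter (\<lambda>v. v \<le> c) xs)"
  show "xs ! (i - 1) \<le> c"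
  proof (rule ccontr)
    assume n: "\<not> xs ! (i - 1) \<le> c"
    have "{j. j < length xs \<and> xs ! j \<le> c} \<subseteq> {0..<i-1}"
    proof
      fix j assume j: "j \<in> {j. j < length xs \<and> xs ! j \<le> c}"
      show "j \<in> {0..<i-1}"
      proof (rule ccontr)
        assume "j \<notin> {0..<i-1}"
        then have "i - 1 \<le> j" by auto
        then have "xs ! (i - 1) \<le> xs ! j" using assms(1) j by (simp add: sorted_iff_nth_mono)
        then show False using n j by auto
      qed
    qed
    then have "card {j. j < length xs \<and> xs ! j \<le> c} \<le> card {0..<i-1}"
      by (intro card_mono) auto
    then show False using h assms by (simp add: length_filter_conv_card)
  qed
qed

lemma pord_le_iff:
  assumes "finite A" "1 \<le> i" "i \<le> card A"
  shows "pord p A i \<le> c \<longleftrightarrow> i \<le> card {x\<in>A. p x \<le> c}"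
proof -
  define xs where "xs = sort (map p (sorted_list_of_set A))"
  have len: "length xs = card A" by (simp add: xs_def)
  have "length (filter (\<lambda>v. v \<le> c) xs) = length (filter (\<lambda>v. v \<le> c) (map p (sorted_list_of_set A)))"
    unfolding xs_def by (simp add: filter_sort)
  also have "\<dots> = length (filter (\<lambda>x. p x \<le> c) (sorted_list_of_set A))"
    by (simp add: filter_map o_def)
  also have "\<dots> = card {x\<in>A. p x \<le> c}"
    using assms(1) by (subst distinct_length_filter) (auto intro: arg_cong[where f=card])
  finally have e: "length (filter (\<lambda>v. v \<le> c) xs) = card {x\<in>A. p x \<le> c}" .
  have "pord p A i = xs ! (i - 1)" by (simp add: pord_def xs_def)
  then show ?thesis using sorted_nth_le_iff[of xs i c] assms len e by (simp add: xs_def)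
qed

lemma card_filter_le_plus:
  assumes "finite B" "A \<subseteq> B"
  shows "card {x\<in>B. P x} \<le> card {x\<in>A. P x} + card (B - A)"
proof -
  have "{x\<in>B. P x} \<subseteq> {x\<in>A. P x} \<union> (B - A)" using assms by auto
  then have "card {x\<in>B. P x} \<le> card ({x\<in>A. P x} \<union> (B - A))"
    using assms by (intro card_mono) (auto intro: finite_subset)
  also have "\<dots> \<le> card {x\<in>A. P x} + card (B - A)" by (rule card_Un_le)
  finally show ?thesis .
qed

lemma card_filter_eq_plus:
  assumes "finite B" "A \<subseteq> B" "B - A \<subseteq> {x. P x}"
  shows "card {x\<in>B. P x} = card {x\<in>A. P x} + card (B - A)"
proof -
  have "{x\<in>B. P x} = {x\<in>A. P x} \<union> (B - A)" using assms by auto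
  moreover have "finite {x\<in>A. P x}" "finite (B - A)" using assms finite_subset[of A B] by auto
  moreover have "{x\<in>A. P x} \<inter> (B - A) = {}" by auto
  ultimately show ?thesis by (simp add: card_Un_disjoint)
qed

lemma discrete_ivt:
  fixes f :: "nat \<Rightarrow> nat"
  assumes "\<forall>k<n. f (Suc k) \<le> Suc (f k)" "f 0 \<le> v" "v \<le> f n"
  shows "\<exists>k\<le>n. f k = v"
  using assms
proof (induction n)
  case 0 then show ?case by auto
next
  case (Suc n)
  show ?case
  proof (cases "v \<le> f n")
    case True
    then obtain k where "k \<le> n" "f k = v" using Suc by auto
    then show ?thesis using le_SucI by blast
  next
    case False
    then have "f (Suc n) = v" using Suc.prems by fastforce
    then show ?thesis by auto
  qed
qed



definition downP :: "(real \<Rightarrow> bool) \<Rightarrow> bool" where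
  "downP P \<longleftrightarrow> (\<forall>a b. a \<le> b \<longrightarrow> P b \<longrightarrow> P a)"

locale sset =
  fixes p :: "nat \<Rightarrow> real" and m :: nat and \<alpha> :: real and r :: "nat \<Rightarrow> nat"
  assumes p01: "\<forall>j\<in>{1..m}. 0 \<le> p j \<and> p j \<le> 1"
    and a0: "0 \<le> \<alpha>" and a1: "\<alpha> \<le> 1"
    and srt: "sorting_perm p m r"
begin

lemma bij: "bij_betw r {1..m} {1..m}" using srt by (simp add: sorting_perm_def)
lemma injr: "inj_on r {1..m}" using bij by (rule bij_betw_imp_inj_on)
lemma imr: "r ` {1..m} = {1..m}" using bij by (rule bij_betw_imp_surj_on)
lemma rin: "j \<in> {1..m} \<Longrightarrow> r j \<in> {1..m}" using imr by blast
lemma mono: "1 \<le> i \<Longrightarrow> i \<le> j \<Longrightarrow> j \<le> m \<Longrightarrow> p (r i) \<le> p (r j)"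
  using srt by (simp add: sorting_perm_def)
lemma pnn: "x \<in> {1..m} \<Longrightarrow> 0 \<le> p x" using p01 by auto
lemma surj: "x \<in> {1..m} \<Longrightarrow> \<exists>j\<in>{1..m}. x = r j" using imr by (metis (no_types, lifting) image_iff)

lemma card_rimg: "B \<subseteq> {1..m} \<Longrightarrow> card (r ` B) = card B"
  using injr by (meson card_image inj_on_subset)

definition cnt :: "nat \<Rightarrow> nat set \<Rightarrow> nat \<Rightarrow> nat" where
  "cnt s A i = card {x\<in>A. real s * p x \<le> real i * \<alpha>}"

lemma U_iff:
  assumes "A \<subseteq> {1..m}"
  shows "A \<in> simesU p m \<alpha> \<longleftrightarrow> (\<exists>i\<in>{1..card A}. i \<le> cnt (card A) A i)"
proof -
  have fin: "finite A" using assms finite_subset by blast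
  have "real (card A) * pord p A i \<le> real i * \<alpha> \<longleftrightarrow> i \<le> cnt (card A) A i"
    if i: "i \<in> {1..card A}" for i
  proof -
    have pos: "real (card A) > 0" using i by auto
    have "real (card A) * pord p A i \<le> real i * \<alpha> \<longleftrightarrow> pord p A i \<le> real i * \<alpha> / real (card A)"
      using pos by (simp add: pos_le_divide_eq mult.commute)
    also have "\<dots> \<longleftrightarrow> i \<le> card {x\<in>A. p x \<le> real i * \<alpha> / real (card A)}"
      using pord_le_iff[OF fin] i by auto
    also have "{x\<in>A. p x \<le> real i * \<alpha> / real (card A)} = {x\<in>A. real (card A) * p x \<le> real i * \<alpha>}"
      using pos by (auto simp: pos_le_divide_eq mult.commute)
    finally show ?thesis by (simp add: cnt_def)
  qed
  then show ?thesis using assms by (auto simp: simesU_def)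
qed

lemma IS1:
  assumes "downP P" "j \<in> {1..m}" "P (p (r j))"
  shows "r ` {1..j} \<subseteq> {x\<in>{1..m}. P (p x)}"
proof
  fix x assume "x \<in> r ` {1..j}"
  then obtain j' where j': "j' \<in> {1..j}" "x = r j'" by auto
  then have "p (r j') \<le> p (r j)" using mono assms(2) by auto
  then have "P (p x)" using assms j' unfolding downP_def by blast
  moreover have "x \<in> {1..m}" using j' assms(2) rin by auto
  ultimately show "x \<in> {x\<in>{1..m}. P (p x)}" by auto
qed

lemma IS1c:
  assumes "downP P" "j \<in> {1..m}" "P (p (r j))"
  shows "j \<le> card {x\<in>{1..m}. P (p x)}"
proof -
  have "card (r ` {1..j}) \<le> card {x\<in>{1..m}. P (p x)}"
    using IS1[OF assms] by (intro card_mono) auto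
  moreover have "card (r ` {1..j}) = j" using assms(2) by (subst card_rimg) auto
  ultimately show ?thesis by simp
qed

lemma IS2:
  assumes "downP P" "j \<in> {1..m}" "\<not> P (p (r j))"
  shows "{x\<in>{1..m}. P (p x)} \<subseteq> r ` {1..j-1}"
proof
  fix x assume x: "x \<in> {x\<in>{1..m}. P (p x)}"
  then obtain j' where j': "j' \<in> {1..m}" "x = r j'" using surj by blast
  have "j' < j"
  proof (rule ccontr)
    assume "\<not> j' < j"
    then have "p (r j) \<le> p (r j')" using mono assms(2) j' by auto
    then show False using assms x j' unfolding downP_def by blast
  qed
  then show "x \<in> r ` {1..j-1}" using j' by auto
qed

lemma IS2c:
  assumes "downP P" "j \<in> {1..m}" "\<not> P (p (r j))"
  shows "card {x\<in>{1..m}. P (p x)} \<le> j - 1"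
proof -
  have "card {x\<in>{1..m}. P (p x)} \<le> card (r ` {1..j-1})"
    using IS2[OF assms] by (intro card_mono) auto
  moreover have "card (r ` {1..j-1}) = j - 1" using assms(2) by (subst card_rimg) auto
  ultimately show ?thesis by simp
qed

lemma downP_scale: "downP (\<lambda>v. real s * v \<le> c)"
  unfolding downP_def
proof (intro allI impI)
  fix a b assume "a \<le> b" "real s * b \<le> c"
  moreover have "real s * a \<le> real s * b" using \<open>a \<le> b\<close> by (simp add: mult_left_mono)
  ultimately show "real s * a \<le> c" by linarith
qed

lemma Kset_sub: "k \<le> m \<Longrightarrow> Kset r m k \<subseteq> {1..m}"
  unfolding Kset_def using rin by auto

lemma card_Kset: "k \<le> m \<Longrightarrow> card (Kset r m k) = k"
  unfolding Kset_def by (subst card_rimg) auto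

lemma compl_K: "k \<le> m \<Longrightarrow> {1..m} - Kset r m k = r ` {1..m-k}"
proof -
  assume k: "k \<le> m"
  have "{1..m} - Kset r m k = r ` {1..m} - r ` {m-k+1..m}" unfolding Kset_def imr ..
  also have "\<dots> = r ` ({1..m} - {m-k+1..m})"
    using injr by (subst inj_on_image_set_diff[where C="{1..m}"]) auto
  also have "{1..m} - {m-k+1..m} = {1..m-k}" using k by auto
  finally show ?thesis .
qed

lemma Kdom:
  assumes "downP P" "n \<le> m" "A \<subseteq> {1..m}" "card A = n"
  shows "card {x\<in>Kset r m n. P (p x)} \<le> card {x\<in>A. P (p x)}"
proof (cases "{x\<in>Kset r m n. P (p x)} = {}")
  case True then show ?thesis by (simp only: True) simp
next
  case False
  then obtain x0 where x0: "x0 \<in> Kset r m n" "P (p x0)" by auto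
  then obtain j0 where j0: "j0 \<in> {m-n+1..m}" "x0 = r j0" unfolding Kset_def by auto
  have j0m: "j0 \<in> {1..m}" using j0 by auto
  have "{1..m} - Kset r m n = r ` {1..m-n}" using compl_K assms by auto
  also have "\<dots> \<subseteq> r ` {1..j0}" using j0 by auto
  also have "\<dots> \<subseteq> {x\<in>{1..m}. P (p x)}" using IS1[OF assms(1) j0m] x0 j0 by auto
  finally have sub: "{1..m} - Kset r m n \<subseteq> {x. P (p x)}" by auto
  have "card {x\<in>{1..m}. P (p x)} = card {x\<in>Kset r m n. P (p x)} + card ({1..m} - Kset r m n)"
    using card_filter_eq_plus[OF _ Kset_sub[OF assms(2)] sub] by simp
  moreover have "card ({1..m} - Kset r m n) = m - n"
    using Kset_sub[OF assms(2)] card_Kset[OF assms(2)] by (simp add: card_Diff_subset finite_subset)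
  moreover have "card {x\<in>{1..m}. P (p x)} \<le> card {x\<in>A. P (p x)} + card ({1..m} - A)"
    using card_filter_le_plus[OF _ assms(3)] by simp
  moreover have "card ({1..m} - A) = m - n"
    using assms by (simp add: card_Diff_subset finite_subset)
  ultimately show ?thesis by linarith
qed

lemma card_le_m: "A \<subseteq> {1..m} \<Longrightarrow> card A \<le> m"
  using card_mono[of "{1..m}" A] by simp

lemma cnt_le_card: "finite A \<Longrightarrow> cnt s A i \<le> card A"
  unfolding cnt_def by (intro card_mono) auto

lemma notU_K:
  assumes "A \<subseteq> {1..m}" "A \<notin> simesU p m \<alpha>"
  shows "Kset r m (card A) \<notin> simesU p m \<alpha>"
proof -
  have cm: "card A \<le> m" using assms(1) by (rule card_le_m)
  have "\<forall>i\<in>{1..card A}. cnt (card A) A i < i" using assms U_iff by (auto simp: not_le)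
  moreover have "cnt (card A) (Kset r m (card A)) i \<le> cnt (card A) A i" for i
    unfolding cnt_def using Kdom[OF downP_scale cm assms(1) refl] .
  ultimately have "\<forall>i\<in>{1..card A}. cnt (card A) (Kset r m (card A)) i < i"
    using le_less_trans by blast
  then have "\<not> (\<exists>i\<in>{1..card (Kset r m (card A))}. i \<le> cnt (card (Kset r m (card A))) (Kset r m (card A)) i)"
    using card_Kset[OF cm] by (simp add: not_le)
  then show ?thesis using U_iff[OF Kset_sub[OF cm]] by blast
qed

definition hh where "hh = h_alpha p m \<alpha> r"

lemma hset_fin: "finite {i. i \<le> m \<and> Kset r m i \<notin> simesU p m \<alpha>}" by auto

lemma K0: "Kset r m 0 = {}" by (simp add: Kset_def)
lemma empty_notU: "{} \<notin> simesU p m \<alpha>" by (simp add: simesU_def)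

lemma hh_in: "hh \<le> m \<and> Kset r m hh \<notin> simesU p m \<alpha>"
proof -
  have "0 \<in> {i. i \<le> m \<and> Kset r m i \<notin> simesU p m \<alpha>}" using K0 empty_notU by auto
  then have "hh \<in> {i. i \<le> m \<and> Kset r m i \<notin> simesU p m \<alpha>}"
    unfolding hh_def h_alpha_def using hset_fin by (intro Max_in) auto
  then show ?thesis by auto
qed

lemma hh_max: "i \<le> m \<Longrightarrow> Kset r m i \<notin> simesU p m \<alpha> \<Longrightarrow> i \<le> hh"
  unfolding hh_def h_alpha_def using hset_fin by (intro Max_ge) auto

lemma notU_le_h: "A \<subseteq> {1..m} \<Longrightarrow> A \<notin> simesU p m \<alpha> \<Longrightarrow> card A \<le> hh"
  using notU_K hh_max card_le_m by blast

lemma hh_le: "hh \<le> m" using hh_in by auto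

lemma hh_succ_U: "hh < m \<Longrightarrow> Kset r m (Suc hh) \<in> simesU p m \<alpha>"
  using hh_max[of "Suc hh"] by auto

end


context sset
begin

definition good where "good A \<longleftrightarrow> (\<forall>i\<ge>1. cnt hh A i < i)"

lemma fin_sub: "A \<subseteq> {1..m} \<Longrightarrow> finite A" using finite_subset by blast

lemma goodK: "good (Kset r m hh)"
  unfolding good_def
proof (intro allI impI)
  fix i :: nat assume i: "1 \<le> i"
  have ck: "card (Kset r m hh) = hh" using card_Kset hh_le by blast
  show "cnt hh (Kset r m hh) i < i"
  proof (cases "i \<le> hh")
    case True
    then show ?thesis using hh_in U_iff[OF Kset_sub[OF hh_le]] ck i by (auto simp: not_le)
  next
    case False
    have "cnt hh (Kset r m hh) i \<le> hh" using cnt_le_card[of "Kset r m hh"] ck fin_sub[OF Kset_sub[OF hh_le]] by simp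
    then show ?thesis using False by simp
  qed
qed

lemma card_compl: "A \<subseteq> {1..m} \<Longrightarrow> card ({1..m} - A) = m - card A"
  by (simp add: card_Diff_subset fin_sub)

lemma cnt_all: "1 \<le> i \<Longrightarrow> cnt hh {1..m} i < i + (m - hh)"
proof -
  assume i: "1 \<le> i"
  have "cnt hh {1..m} i \<le> cnt hh (Kset r m hh) i + card ({1..m} - Kset r m hh)"
    unfolding cnt_def by (rule card_filter_le_plus[OF _ Kset_sub[OF hh_le]]) simp
  moreover have "card ({1..m} - Kset r m hh) = m - hh"
    using card_compl[OF Kset_sub[OF hh_le]] card_Kset[OF hh_le] by simp
  moreover have "cnt hh (Kset r m hh) i < i" using goodK i good_def by blast
  ultimately show ?thesis by linarith
qed

lemma cnt_mono_set: "A \<subseteq> B \<Longrightarrow> finite B \<Longrightarrow> cnt s A i \<le> cnt s B i"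
  unfolding cnt_def by (intro card_mono) auto

lemma cnt_mono_scale:
  assumes "A \<subseteq> {1..m}" "s \<le> s'"
  shows "cnt s' A i \<le> cnt s A i"
  unfolding cnt_def
proof (intro card_mono)
  show "finite {x \<in> A. real s * p x \<le> real i * \<alpha>}" using fin_sub[OF assms(1)] by simp
  show "{x \<in> A. real s' * p x \<le> real i * \<alpha>} \<subseteq> {x \<in> A. real s * p x \<le> real i * \<alpha>}"
  proof
    fix x assume x: "x \<in> {x \<in> A. real s' * p x \<le> real i * \<alpha>}"
    then have "0 \<le> p x" using pnn assms(1) by auto
    then have "real s * p x \<le> real s' * p x" using assms(2) by (simp add: mult_right_mono)
    then show "x \<in> {x \<in> A. real s * p x \<le> real i * \<alpha>}" using x by auto
  qed
qed

lemma Kset_Suc: "j < m \<Longrightarrow> Kset r m (Suc j) = insert (r (m - j)) (Kset r m j)"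
proof -
  assume j: "j < m"
  have "{m - Suc j + 1..m} = insert (m - j) {m - j + 1..m}" using j by auto
  then show ?thesis unfolding Kset_def by simp
qed

lemma Kset_m: "Kset r m m = {1..m}" unfolding Kset_def using imr by simp

lemma good_card_le: assumes "I \<subseteq> {1..m}" "good I" shows "card I \<le> hh"
proof (rule ccontr)
  assume "\<not> card I \<le> hh"
  then have lt: "hh < card I" by simp
  have "\<forall>i\<in>{1..card I}. cnt (card I) I i < i"
  proof
    fix i assume "i \<in> {1..card I}"
    then have "cnt hh I i < i" using assms(2) good_def by auto
    moreover have "cnt (card I) I i \<le> cnt hh I i" using cnt_mono_scale[OF assms(1)] lt by simp
    ultimately show "cnt (card I) I i < i" by simp
  qed
  then have "I \<notin> simesU p m \<alpha>" using U_iff[OF assms(1)] by (auto simp: not_le)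
  then have "card I \<le> hh" using notU_le_h assms(1) by blast
  then show False using lt by simp
qed

lemma notX_iff:
  assumes "I \<subseteq> {1..m}"
  shows "I \<notin> closedX p m \<alpha> \<longleftrightarrow> good I"
proof
  assume "I \<notin> closedX p m \<alpha>"
  then obtain J where J: "I \<subseteq> J" "J \<subseteq> {1..m}" "J \<notin> simesU p m \<alpha>"
    using assms by (auto simp: closedX_def)
  have n: "card J \<le> hh" using notU_le_h J by blast
  show "good I" unfolding good_def
  proof (intro allI impI)
    fix i :: nat assume i: "1 \<le> i"
    have "cnt hh I i \<le> cnt hh J i" using cnt_mono_set J fin_sub by blast
    also have "\<dots> \<le> cnt (card J) J i" using cnt_mono_scale[OF J(2) n] .
    also have "\<dots> < i"
    proof (cases "i \<le> card J")
      case True then show ?thesis using J U_iff[OF J(2)] i by (auto simp: not_le)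
    next
      case False then show ?thesis using cnt_le_card[OF fin_sub[OF J(2)], of "card J" i] by simp
    qed
    finally show "cnt hh I i < i" .
  qed
next
  assume g: "good I"
  have cI: "card I \<le> hh" using good_card_le assms g by blast
  define f where "f j = card (I \<union> Kset r m j)" for j
  have step: "\<forall>k<m. f (Suc k) \<le> Suc (f k)"
  proof (intro allI impI)
    fix k assume "k < m"
    then have "I \<union> Kset r m (Suc k) = insert (r (m - k)) (I \<union> Kset r m k)" using Kset_Suc by auto
    moreover have "finite (I \<union> Kset r m k)" using fin_sub[OF assms] by (simp add: Kset_def)
    ultimately show "f (Suc k) \<le> Suc (f k)" unfolding f_def by (simp add: card_insert_if)
  qed
  have f0: "f 0 \<le> hh" using cI K0 by (simp add: f_def)
  have fm: "hh \<le> f m" using assms Kset_m hh_le by (simp add: f_def Un_absorb1)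
  obtain j where j: "j \<le> m" "f j = hh" using discrete_ivt[OF step f0 fm] by blast
  define J where "J = I \<union> Kset r m j"
  have Jm: "J \<subseteq> {1..m}" using assms Kset_sub[OF j(1)] by (simp add: J_def)
  have cJ: "card J = hh" using j by (simp add: f_def J_def)
  have "\<forall>i\<in>{1..hh}. cnt hh J i < i"
  proof
    fix i assume i: "i \<in> {1..hh}"
    define P where "P = (\<lambda>v. real hh * v \<le> real i * \<alpha>)"
    have dP: "downP P" unfolding P_def by (rule downP_scale)
    have ce: "cnt hh A i = card {x\<in>A. P (p x)}" for A unfolding cnt_def P_def by simp
    show "cnt hh J i < i"
    proof (cases "{x\<in>Kset r m j. P (p x)} = {}")
      case True
      then have "{x\<in>J. P (p x)} = {x\<in>I. P (p x)}" unfolding J_def by auto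
      then show ?thesis using g i ce good_def by auto
    next
      case False
      then obtain x0 where x0: "x0 \<in> Kset r m j" "P (p x0)" by auto
      then obtain j0 where j0: "j0 \<in> {m-j+1..m}" "x0 = r j0" unfolding Kset_def by auto
      have j0m: "j0 \<in> {1..m}" using j0 by auto
      have "{1..m} - J \<subseteq> {1..m} - Kset r m j" unfolding J_def by auto
      also have "\<dots> = r ` {1..m-j}" using compl_K j by auto
      also have "\<dots> \<subseteq> r ` {1..j0}" using j0 by auto
      also have "\<dots> \<subseteq> {x\<in>{1..m}. P (p x)}" using IS1[OF dP j0m] x0 j0 by auto
      finally have sub: "{1..m} - J \<subseteq> {x. P (p x)}" by auto
      have e1: "card {x\<in>{1..m}. P (p x)} = card {x\<in>J. P (p x)} + card ({1..m} - J)"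
        using card_filter_eq_plus[OF _ Jm sub] by simp
      have e2: "card {x\<in>{1..m}. P (p x)} \<le> card {x\<in>Kset r m hh. P (p x)} + card ({1..m} - Kset r m hh)"
        using card_filter_le_plus[OF _ Kset_sub[OF hh_le]] by simp
      have e3: "card ({1..m} - J) = m - hh" using card_compl[OF Jm] cJ by simp
      have e4: "card ({1..m} - Kset r m hh) = m - hh"
        using card_compl[OF Kset_sub[OF hh_le]] card_Kset[OF hh_le] by simp
      have e5: "card {x\<in>Kset r m hh. P (p x)} < i" using goodK i ce good_def by auto
      show ?thesis using e1 e2 e3 e4 e5 ce[of J] by linarith
    qed
  qed
  then have "J \<notin> simesU p m \<alpha>" using U_iff[OF Jm] cJ by (auto simp: not_le)
  moreover have "I \<subseteq> J" by (simp add: J_def)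
  ultimately show "I \<notin> closedX p m \<alpha>" using Jm by (auto simp: closedX_def)
qed

end


context sset
begin

definition okD where "okD S D \<longleftrightarrow> (\<forall>i\<ge>1. cnt hh S i < i + D)"
definition Dm where "Dm S = (LEAST D. okD S D)"

lemma okD_card: "finite S \<Longrightarrow> okD S (card S)"
  unfolding okD_def using cnt_le_card by (meson le_trans less_add_same_cancel2 not_le zero_less_one less_le_trans)

lemma Dm_ok: "finite S \<Longrightarrow> okD S (Dm S)"
  unfolding Dm_def using okD_card by (rule LeastI)

lemma Dm_le_card: "finite S \<Longrightarrow> Dm S \<le> card S"
  unfolding Dm_def using okD_card by (rule Least_le)

lemma okD_mono: "okD S D \<Longrightarrow> D \<le> D' \<Longrightarrow> okD S D'"
  unfolding okD_def by (meson add_le_mono1 add_left_mono less_le_trans)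

lemma Dm_le_iff: "finite S \<Longrightarrow> Dm S \<le> D \<longleftrightarrow> okD S D"
  using Dm_ok okD_mono by (auto simp: Dm_def intro: Least_le)

lemma okD_sub: "A \<subseteq> B \<Longrightarrow> finite B \<Longrightarrow> okD B D \<Longrightarrow> okD A D"
  unfolding okD_def using cnt_mono_set by (meson le_less_trans)

lemma Dm_mono: "A \<subseteq> B \<Longrightarrow> finite B \<Longrightarrow> Dm A \<le> Dm B"
  using Dm_le_iff Dm_ok okD_sub finite_subset by metis

lemma good_upper:
  assumes "finite S" "I \<subseteq> S" "good I"
  shows "card I \<le> card S - Dm S"
proof -
  have "okD S (card S - card I)" unfolding okD_def
  proof (intro allI impI)
    fix i :: nat assume i: "1 \<le> i"
    have "cnt hh S i \<le> cnt hh I i + card (S - I)"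
      unfolding cnt_def using card_filter_le_plus[OF assms(1,2)] .
    moreover have "card (S - I) = card S - card I" using assms by (simp add: card_Diff_subset finite_subset)
    moreover have "cnt hh I i < i" using assms(3) i good_def by blast
    ultimately show "cnt hh S i < i + (card S - card I)" by linarith
  qed
  then have "Dm S \<le> card S - card I" using Dm_le_iff assms(1) by blast
  moreover have "card I \<le> card S" using assms by (simp add: card_mono)
  ultimately show ?thesis by linarith
qed

lemma good_lower:
  assumes S: "S \<subseteq> {1..m}"
  shows "\<exists>I\<subseteq>S. good I \<and> card I = card S - Dm S"
proof -
  have fS: "finite S" using fin_sub S by blast
  define f where "f k = card (S \<inter> r ` {1..k})" for k
  have step: "\<forall>k<m. f (Suc k) \<le> Suc (f k)"
  proof (intro allI impI)
    fix k assume "k < m"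
    have "{1..Suc k} = insert (Suc k) {1..k}" by auto
    then have "S \<inter> r ` {1..Suc k} \<subseteq> insert (r (Suc k)) (S \<inter> r ` {1..k})" by auto
    then have "card (S \<inter> r ` {1..Suc k}) \<le> card (insert (r (Suc k)) (S \<inter> r ` {1..k}))"
      by (intro card_mono) auto
    also have "\<dots> \<le> Suc (card (S \<inter> r ` {1..k}))" by (simp add: card_insert_if)
    finally show "f (Suc k) \<le> Suc (f k)" unfolding f_def .
  qed
  have f0: "f 0 \<le> Dm S" by (simp add: f_def)
  have fm: "Dm S \<le> f m" using Dm_le_card[OF fS] S imr by (simp add: f_def Int_absorb2)
  obtain k where k: "k \<le> m" "f k = Dm S" using discrete_ivt[OF step f0 fm] by blast
  define L where "L = r ` {1..k}"
  define I where "I = S - L"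
  have cI: "card I = card S - Dm S"
  proof -
    have "I = S - (S \<inter> L)" by (auto simp: I_def)
    then have "card I = card S - card (S \<inter> L)" using fS by (simp add: card_Diff_subset)
    then show ?thesis using k by (simp add: f_def L_def)
  qed
  have "good I" unfolding good_def
  proof (intro allI impI)
    fix i :: nat assume i: "1 \<le> i"
    define P where "P = (\<lambda>v. real hh * v \<le> real i * \<alpha>)"
    have dP: "downP P" unfolding P_def by (rule downP_scale)
    have ce: "cnt hh A i = card {x\<in>A. P (p x)}" for A unfolding cnt_def P_def by simp
    show "cnt hh I i < i"
    proof (cases "{x\<in>I. P (p x)} = {}")
      case True then show ?thesis using ce[of I] i by (simp only: True) simp
    next
      case False
      then obtain x0 where x0: "x0 \<in> I" "P (p x0)" by auto
      then have "x0 \<in> {1..m}" using S by (auto simp: I_def)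
      then obtain j0 where j0: "j0 \<in> {1..m}" "x0 = r j0" using surj by blast
      have "j0 > k" using x0 j0 by (auto simp: I_def L_def)
      then have "L \<subseteq> r ` {1..j0}" by (auto simp: L_def)
      also have "\<dots> \<subseteq> {x\<in>{1..m}. P (p x)}" using IS1[OF dP j0(1)] x0 j0 by auto
      finally have sub: "S - I \<subseteq> {x. P (p x)}" by (auto simp: I_def)
      have IS: "I \<subseteq> S" by (auto simp: I_def)
      have "card {x\<in>S. P (p x)} = card {x\<in>I. P (p x)} + card (S - I)"
        using card_filter_eq_plus[OF fS IS sub] by simp
      moreover have "card (S - I) = Dm S" using k by (simp add: f_def L_def I_def Diff_Diff_Int)
      moreover have "cnt hh S i < i + Dm S" using Dm_ok[OF fS] i okD_def by blast
      ultimately show ?thesis using ce by simp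
    qed
  qed
  then show ?thesis using cI by (auto simp: I_def)
qed

lemma d_eq:
  assumes S: "S \<subseteq> {1..m}"
  shows "d_alpha p m \<alpha> S = Dm S"
proof -
  have fS: "finite S" using fin_sub S by blast
  define T where "T = {card I | I. I \<subseteq> S \<and> I \<notin> closedX p m \<alpha>}"
  have "Max T = card S - Dm S"
  proof (rule Max_eqI)
    have "T \<subseteq> {..card S}" unfolding T_def using fS by (auto intro: card_mono)
    then show "finite T" using finite_subset by blast
  next
    fix y assume "y \<in> T"
    then obtain I where I: "y = card I" "I \<subseteq> S" "I \<notin> closedX p m \<alpha>" unfolding T_def by blast
    then have "good I" using notX_iff S by blast
    then show "y \<le> card S - Dm S" using good_upper[OF fS I(2)] I(1) by simp
  next
    obtain I where I: "I \<subseteq> S" "good I" "card I = card S - Dm S" using good_lower[OF S] by blast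
    then have "I \<notin> closedX p m \<alpha>" using notX_iff S by blast
    then show "card S - Dm S \<in> T" unfolding T_def using I by (metis (mono_tags, lifting) mem_Collect_eq)
  qed
  then show ?thesis unfolding d_alpha_def t_alpha_def T_def using Dm_le_card[OF fS] by simp
qed

end


lemma card_split:
  assumes "finite B" "A \<subseteq> B"
  shows "card {x\<in>B. P x} = card {x\<in>A. P x} + card {x\<in>B - A. P x}"
proof -
  have "{x\<in>B. P x} = {x\<in>A. P x} \<union> {x\<in>B - A. P x}" using assms by auto
  moreover have "finite {x\<in>A. P x}" "finite {x\<in>B - A. P x}" using assms finite_subset[of A B] by auto
  moreover have "{x\<in>A. P x} \<inter> {x\<in>B - A. P x} = {}" by auto
  ultimately show ?thesis by (simp add: card_Un_disjoint)
qed

context sset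
begin

definition zz where "zz = z_alpha p m \<alpha> r"
definition ZZ where "ZZ = Z_alpha p m \<alpha> r"

lemma ZZ_eq: "ZZ = r ` {1..zz}" by (simp add: ZZ_def zz_def Z_alpha_def Lset_def)

definition zset where "zset = {i. m - hh \<le> i \<and> i \<le> m \<and>
                  real hh * p (r i) \<le> (real i - real m + real hh + 1) * \<alpha>}"

lemma zz_eq: "hh < m \<Longrightarrow> zz = Min zset"
  by (simp add: zz_def z_alpha_def zset_def hh_def[symmetric] Let_def)

lemma zz0: "hh = m \<Longrightarrow> zz = 0"
  by (simp add: zz_def z_alpha_def hh_def[symmetric] Let_def)

lemma wit:
  assumes hm: "hh < m"
  shows "\<exists>j i. m - hh \<le> j \<and> j \<le> m \<and> 1 \<le> i \<and> i \<le> Suc hh \<and> j = i + (m - Suc hh) \<and>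
      real (Suc hh) * p (r j) \<le> real i * \<alpha>"
proof -
  have sm: "Suc hh \<le> m" using hm by simp
  define K where "K = Kset r m (Suc hh)"
  have Km: "K \<subseteq> {1..m}" using Kset_sub[OF sm] by (simp add: K_def)
  have cK: "card K = Suc hh" using card_Kset[OF sm] by (simp add: K_def)
  obtain i where i: "i \<in> {1..Suc hh}" "i \<le> cnt (Suc hh) K i"
    using hh_succ_U[OF hm] U_iff[OF Km] cK by (auto simp: K_def)
  define j where "j = i + (m - Suc hh)"
  have j: "j \<in> {1..m}" "m - hh \<le> j" using i hm by (auto simp: j_def)
  define P where "P = (\<lambda>v. real (Suc hh) * v \<le> real i * \<alpha>)"
  have dP: "downP P" unfolding P_def by (rule downP_scale)
  have "P (p (r j))"
  proof (rule ccontr)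
    assume n: "\<not> P (p (r j))"
    have "{x\<in>K. P (p x)} \<subseteq> r ` {1..j-1} \<inter> r ` {m - Suc hh + 1..m}"
    proof
      fix x assume x: "x \<in> {x\<in>K. P (p x)}"
      then have "x \<in> {x\<in>{1..m}. P (p x)}" using Km by auto
      then have "x \<in> r ` {1..j-1}" using IS2[OF dP j(1) n] by blast
      moreover have "x \<in> r ` {m - Suc hh + 1..m}" using x by (simp add: K_def Kset_def)
      ultimately show "x \<in> r ` {1..j-1} \<inter> r ` {m - Suc hh + 1..m}" by blast
    qed
    also have "\<dots> = r ` ({1..j-1} \<inter> {m - Suc hh + 1..m})"
      using injr j by (subst inj_on_image_Int[where C="{1..m}"]) auto
    also have "{1..j-1} \<inter> {m - Suc hh + 1..m} = {m - Suc hh + 1..j-1}" using j by auto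
    finally have "card {x\<in>K. P (p x)} \<le> card (r ` {m - Suc hh + 1..j-1})"
      by (intro card_mono) auto
    also have "\<dots> = card {m - Suc hh + 1..j-1}" using j by (subst card_rimg) auto
    also have "\<dots> = i - 1" using i hm by (simp add: j_def)
    finally have "cnt (Suc hh) K i \<le> i - 1" unfolding cnt_def P_def by simp
    moreover have "1 \<le> i" using i by simp
    ultimately show False using i(2) by linarith
  qed
  then show ?thesis using i j unfolding P_def j_def by (intro exI[of _ j] exI[of _ i]) (auto simp: j_def)
qed

lemma zset_fin: "finite zset" unfolding zset_def by auto

lemma zset_ne: "hh < m \<Longrightarrow> zset \<noteq> {}"
proof -
  assume hm: "hh < m"
  obtain j i where ji: "m - hh \<le> j" "j \<le> m" "1 \<le> i" "i \<le> Suc hh" "j = i + (m - Suc hh)"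
     "real (Suc hh) * p (r j) \<le> real i * \<alpha>" using wit[OF hm] by blast
  have "0 \<le> p (r j)" using pnn rin ji by auto
  then have "real hh * p (r j) \<le> real (Suc hh) * p (r j)" by (simp add: mult_right_mono)
  moreover have "real j - real m + real hh + 1 = real i" using ji hm by (simp add: of_nat_diff)
  ultimately have "j \<in> zset" using ji unfolding zset_def by auto
  then show ?thesis by auto
qed

lemma z_props:
  assumes hm: "hh < m"
  shows "m - hh \<le> zz \<and> zz \<le> m \<and> real hh * p (r zz) \<le> real (zz + hh + 1 - m) * \<alpha>"
proof -
  have "zz \<in> zset" using zz_eq[OF hm] zset_fin zset_ne[OF hm] by simp
  then have z: "m - hh \<le> zz" "zz \<le> m" "real hh * p (r zz) \<le> (real zz - real m + real hh + 1) * \<alpha>"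
    unfolding zset_def by auto
  have e: "real zz - real m + real hh + 1 = real (zz + hh + 1 - m)" using z hm by (simp add: of_nat_diff)
  show ?thesis using z(1,2) z(3)[unfolded e] by simp
qed

lemma z_min:
  assumes hm: "hh < m" and j: "m - hh \<le> j" "j \<le> m" "real hh * p (r j) \<le> real (j + hh + 1 - m) * \<alpha>"
  shows "zz \<le> j"
proof -
  have e: "real j - real m + real hh + 1 = real (j + hh + 1 - m)" using j hm by (simp add: of_nat_diff)
  have "j \<in> zset" using j(1,2) j(3)[folded e] unfolding zset_def by auto
  then show ?thesis using zz_eq[OF hm] zset_fin by simp
qed

lemma z_le_b:
  assumes hm: "hh < m"
  shows "zz \<le> b_alpha p m \<alpha> r"
proof -
  obtain j i where ji: "m - hh \<le> j" "j \<le> m" "1 \<le> i" "i \<le> Suc hh" "j = i + (m - Suc hh)"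
     "real (Suc hh) * p (r j) \<le> real i * \<alpha>" using wit[OF hm] by blast
  have pj: "0 \<le> p (r j)" using pnn rin ji by auto
  then have "real hh * p (r j) \<le> real (Suc hh) * p (r j)" by (simp add: mult_right_mono)
  moreover have "j + hh + 1 - m = i" using ji hm by simp
  ultimately have zj: "zz \<le> j" using z_min[OF hm ji(1,2)] ji(6) by simp
  define H where "H = real (Suc hh)"
  have Hp: "H > 0" by (simp add: H_def)
  have rj: "real j = real i + real m - H" using ji hm by (simp add: H_def of_nat_diff)
  have "0 \<le> (real m - H) * (H - real i)" using ji hm by (simp add: H_def)
  moreover have "real j * H = (real i + real m - H) * H" using rj by simp
  ultimately have mi: "real m * real i \<le> real j * H" by (simp add: algebra_simps)
  have "H * (real m * p (r j)) = real m * (H * p (r j))" by (simp add: algebra_simps)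
  also have "\<dots> \<le> real m * (real i * \<alpha>)" using ji(6) by (simp add: H_def mult_left_mono)
  also have "\<dots> = (real m * real i) * \<alpha>" by simp
  also have "\<dots> \<le> (real j * H) * \<alpha>" using mi a0 by (simp add: mult_right_mono)
  also have "\<dots> = H * (real j * \<alpha>)" by simp
  finally have "real m * p (r j) \<le> real j * \<alpha>" using Hp by simp
  moreover have "1 \<le> j" using ji hm by simp
  ultimately have "j \<in> insert 0 {i. 1 \<le> i \<and> i \<le> m \<and> real m * p (r i) \<le> real i * \<alpha>}" using ji by auto
  then have "j \<le> b_alpha p m \<alpha> r" unfolding b_alpha_def by (intro Max_ge) auto
  then show ?thesis using zj by simp
qed

end


context sset
begin

lemma ZZm: "ZZ \<subseteq> {1..m}"
proof -
  have "zz \<le> m" using z_props zz0 hh_le by (cases "hh = m") auto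
  then show ?thesis unfolding ZZ_eq using rin by auto
qed

lemma card_ZZ: "card ZZ = zz"
proof -
  have "zz \<le> m" using z_props zz0 hh_le by (cases "hh = m") auto
  then show ?thesis unfolding ZZ_eq by (subst card_rimg) auto
qed

lemma ZZ_empty: "hh = m \<Longrightarrow> ZZ = {}" using zz0 ZZ_eq by simp

definition uu where "uu = zz + hh + 1 - m"

lemma uu_facts: "hh < m \<Longrightarrow> 1 \<le> uu \<and> zz = uu + (m - hh) - 1 \<and> 1 \<le> zz"
  using z_props[of] unfolding uu_def by auto

lemma F1: assumes hm: "hh < m" and ui: "uu \<le> i" and xz: "x \<in> ZZ" shows "real hh * p x \<le> real i * \<alpha>"
proof -
  obtain j where j: "j \<in> {1..zz}" "x = r j" using xz ZZ_eq by auto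
  have z: "m - hh \<le> zz" "zz \<le> m" "real hh * p (r zz) \<le> real uu * \<alpha>" using z_props[OF hm] uu_def by auto
  have "p (r j) \<le> p (r zz)" using mono j z by auto
  then have "real hh * p (r j) \<le> real hh * p (r zz)" by (simp add: mult_left_mono)
  also have "\<dots> \<le> real uu * \<alpha>" using z by simp
  also have "\<dots> \<le> real i * \<alpha>" using ui a0 by (simp add: mult_right_mono)
  finally show ?thesis using j by simp
qed

lemma F2: assumes hm: "hh < m" and i: "1 \<le> i" "i \<le> uu" and x: "x \<in> {1..m}" "real hh * p x \<le> real i * \<alpha>"
  shows "x \<in> ZZ"
proof -
  obtain j where j: "j \<in> {1..m}" "x = r j" using surj x by blast
  have "j \<le> cnt hh {1..m} i" unfolding cnt_def
    using IS1c[OF downP_scale j(1), of hh "real i * \<alpha>"] x j by simp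
  moreover have "cnt hh {1..m} i < i + (m - hh)" using cnt_all i by blast
  ultimately have "j \<le> zz" using uu_facts[OF hm] i by linarith
  then show ?thesis using j ZZ_eq by auto
qed

lemma F3: assumes hm: "hh < m" and i: "uu \<le> i"
  shows "card {x\<in>{1..m} - ZZ. real hh * p x \<le> real i * \<alpha>} \<le> i - uu"
proof -
  have "cnt hh {1..m} i = cnt hh ZZ i + card {x\<in>{1..m} - ZZ. real hh * p x \<le> real i * \<alpha>}"
    unfolding cnt_def by (rule card_split[OF _ ZZm]) simp
  moreover have "cnt hh ZZ i = zz"
  proof -
    have "{x\<in>ZZ. real hh * p x \<le> real i * \<alpha>} = ZZ" using F1[OF hm i] by auto
    then show ?thesis unfolding cnt_def using card_ZZ by simp
  qed
  moreover have "cnt hh {1..m} i < i + (m - hh)" using cnt_all i uu_facts[OF hm] by simp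
  ultimately show ?thesis using uu_facts[OF hm] by linarith
qed

lemma claim1: assumes S: "S \<subseteq> {1..m}" shows "Dm S = Dm (S \<inter> ZZ)"
proof -
  have fS: "finite S" using fin_sub S by blast
  have "okD S = okD (S \<inter> ZZ)"
  proof (cases "hh = m")
    case True
    have "okD S D" for D unfolding okD_def
    proof (intro allI impI)
      fix i :: nat assume "1 \<le> i"
      then have "cnt hh {1..m} i < i + (m - hh)" by (rule cnt_all)
      moreover have "cnt hh S i \<le> cnt hh {1..m} i" using cnt_mono_set[OF S] by simp
      ultimately show "cnt hh S i < i + D" using True by linarith
    qed
    moreover have "okD (S \<inter> ZZ) D" for D using True ZZ_empty by (simp add: okD_def cnt_def)
    ultimately show ?thesis by auto
  next
    case False
    then have hm: "hh < m" using hh_le by simp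
    show ?thesis
    proof (intro ext iffI)
      fix D assume "okD S D" then show "okD (S \<inter> ZZ) D" using okD_sub[OF _ fS] by (meson Int_lower1)
    next
      fix D assume ok: "okD (S \<inter> ZZ) D"
      show "okD S D" unfolding okD_def
      proof (intro allI impI)
        fix i :: nat assume i: "1 \<le> i"
        show "cnt hh S i < i + D"
        proof (cases "i \<le> uu")
          case True
          have "{x\<in>S. real hh * p x \<le> real i * \<alpha>} = {x\<in>S \<inter> ZZ. real hh * p x \<le> real i * \<alpha>}"
          proof (intro Collect_cong iffI)
            fix x assume "x \<in> S \<and> real hh * p x \<le> real i * \<alpha>"
            then show "x \<in> S \<inter> ZZ \<and> real hh * p x \<le> real i * \<alpha>" using F2[OF hm i True, of x] S by blast
          qed auto
          then have "cnt hh S i = cnt hh (S \<inter> ZZ) i" unfolding cnt_def by simp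
          then show ?thesis using ok i unfolding okD_def by simp
        next
          case False
          have "cnt hh S i = cnt hh (S \<inter> ZZ) i + card {x\<in>S - (S \<inter> ZZ). real hh * p x \<le> real i * \<alpha>}"
            unfolding cnt_def by (rule card_split[OF fS]) auto
          moreover have "cnt hh (S \<inter> ZZ) i \<le> card (S \<inter> ZZ)" using cnt_le_card fS by simp
          moreover have "card {x\<in>S - (S \<inter> ZZ). real hh * p x \<le> real i * \<alpha>}
               \<le> card {x\<in>{1..m} - ZZ. real hh * p x \<le> real i * \<alpha>}"
            using S by (intro card_mono) auto
          moreover have "card {x\<in>{1..m} - ZZ. real hh * p x \<le> real i * \<alpha>} \<le> i - uu"
            using F3[OF hm] False by simp
          moreover have "cnt hh (S \<inter> ZZ) uu = card (S \<inter> ZZ)"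
          proof -
            have "{x\<in>S \<inter> ZZ. real hh * p x \<le> real uu * \<alpha>} = S \<inter> ZZ" using F1[OF hm order_refl] by auto
            then show ?thesis unfolding cnt_def by simp
          qed
          moreover have "cnt hh (S \<inter> ZZ) uu < uu + D" using ok uu_facts[OF hm] unfolding okD_def by blast
          ultimately show ?thesis using False by linarith
        qed
      qed
    qed
  qed
  then show ?thesis unfolding Dm_def by simp
qed

lemma claim3: "Dm ZZ = m - hh"
proof (cases "hh = m")
  case True
  have "okD ZZ 0" using True ZZ_empty by (simp add: okD_def cnt_def)
  then show ?thesis using True Dm_le_iff[of ZZ 0] fin_sub[OF ZZm] by simp
next
  case False
  then have hm: "hh < m" using hh_le by simp
  have fZ: "finite ZZ" using fin_sub ZZm by blast
  have "okD ZZ (m - hh)" unfolding okD_def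
  proof (intro allI impI)
    fix i :: nat assume "1 \<le> i"
    then have "cnt hh {1..m} i < i + (m - hh)" by (rule cnt_all)
    moreover have "cnt hh ZZ i \<le> cnt hh {1..m} i" using cnt_mono_set[OF ZZm] by simp
    ultimately show "cnt hh ZZ i < i + (m - hh)" by linarith
  qed
  then have le: "Dm ZZ \<le> m - hh" using Dm_le_iff fZ by blast
  have "cnt hh ZZ uu = zz"
  proof -
    have "{x\<in>ZZ. real hh * p x \<le> real uu * \<alpha>} = ZZ" using F1[OF hm order_refl] by auto
    then show ?thesis unfolding cnt_def using card_ZZ by simp
  qed
  moreover have "cnt hh ZZ uu < uu + Dm ZZ" using Dm_ok[OF fZ] uu_facts[OF hm] unfolding okD_def by blast
  ultimately have "m - hh \<le> Dm ZZ" using uu_facts[OF hm] by linarith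
  then show ?thesis using le by simp
qed

lemma claim2:
  assumes Y: "Y \<subseteq> {1..m}" and H: "\<forall>S. S \<subseteq> {1..m} \<longrightarrow> d_alpha p m \<alpha> S = d_alpha p m \<alpha> (S \<inter> Y)"
  shows "ZZ \<subseteq> Y"
proof (cases "hh = m")
  case True then show ?thesis using ZZ_empty by simp
next
  case False
  then have hm: "hh < m" using hh_le by simp
  have fZ: "finite ZZ" using fin_sub ZZm by blast
  show ?thesis
  proof (rule ccontr)
    assume "\<not> ZZ \<subseteq> Y"
    then obtain x where x: "x \<in> ZZ" "x \<notin> Y" by auto
    have ZYm: "ZZ \<inter> Y \<subseteq> {1..m}" using ZZm by blast
    have "Dm ZZ = Dm (ZZ \<inter> Y)" using H ZZm d_eq[OF ZZm] d_eq[OF ZYm] by simp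
    also have "\<dots> \<le> Dm (ZZ - {x})" using x fZ by (intro Dm_mono) auto
    also have "\<dots> \<le> m - hh - 1"
    proof -
      have "okD (ZZ - {x}) (m - hh - 1)" unfolding okD_def
      proof (intro allI impI)
        fix i :: nat assume i: "1 \<le> i"
        show "cnt hh (ZZ - {x}) i < i + (m - hh - 1)"
        proof (cases "uu \<le> i")
          case True
          have "cnt hh (ZZ - {x}) i \<le> card (ZZ - {x})" using cnt_le_card fZ by simp
          also have "\<dots> = zz - 1" using card_ZZ x fZ by simp
          finally show ?thesis using uu_facts[OF hm] True hm by linarith
        next
          case False
          have c1: "cnt hh (ZZ - {x}) i \<le> cnt hh ZZ i" using cnt_mono_set fZ by blast
          have "cnt hh ZZ i < i + (m - hh - 1)"
          proof (rule ccontr)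
            assume "\<not> cnt hh ZZ i < i + (m - hh - 1)"
            then have ge: "i + (m - hh - 1) \<le> cnt hh ZZ i" by simp
            define j where "j = i + (m - hh - 1)"
            have uf: "1 \<le> uu" "zz = uu + (m - hh) - 1" using uu_facts[OF hm] by auto
            have jr: "m - hh \<le> j" "j < zz" "1 \<le> j" using i False uf hm unfolding j_def by linarith+
            have jm: "j \<in> {1..m}" using jr z_props[OF hm] by auto
            have P: "real hh * p (r j) \<le> real i * \<alpha>"
            proof (rule ccontr)
              assume n: "\<not> real hh * p (r j) \<le> real i * \<alpha>"
              have "card {x\<in>{1..m}. real hh * p x \<le> real i * \<alpha>} \<le> j - 1"
                using IS2c[OF downP_scale jm, of hh "real i * \<alpha>"] n by simp
              moreover have "cnt hh ZZ i \<le> cnt hh {1..m} i" using cnt_mono_set ZZm by simp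
              ultimately show False using ge jr unfolding cnt_def j_def by linarith
            qed
            have "j + hh + 1 - m = i" using hm by (simp add: j_def)
            then have "zz \<le> j" using z_min[OF hm jr(1)] jm P by simp
            then show False using jr by simp
          qed
          then show ?thesis using c1 by linarith
        qed
      qed
      then show ?thesis using Dm_le_iff fZ x by blast
    qed
    finally have "Dm ZZ \<le> m - hh - 1" .
    then show False using claim3 hm by simp
  qed
qed

lemma claim4: "ZZ \<subseteq> B_alpha p m \<alpha> r"
proof (cases "hh = m")
  case True then show ?thesis using ZZ_empty by simp
next
  case False
  then have "zz \<le> b_alpha p m \<alpha> r" using z_le_b hh_le by simp
  then show ?thesis unfolding ZZ_eq B_alpha_def Lset_def by auto
qed

lemma main:
  "(\<forall>S. S \<subseteq> {1..m} \<longrightarrow>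
            d_alpha p m \<alpha> S = d_alpha p m \<alpha> (S \<inter> Z_alpha p m \<alpha> r))
       \<and> (\<forall>Y. Y \<subseteq> {1..m} \<longrightarrow>
            (\<forall>S. S \<subseteq> {1..m} \<longrightarrow> d_alpha p m \<alpha> S = d_alpha p m \<alpha> (S \<inter> Y)) \<longrightarrow>
            Z_alpha p m \<alpha> r \<subseteq> Y)
       \<and> d_alpha p m \<alpha> (Z_alpha p m \<alpha> r) = m - h_alpha p m \<alpha> r
       \<and> Z_alpha p m \<alpha> r \<subseteq> B_alpha p m \<alpha> r"
proof (intro conjI allI impI)
  fix S assume S: "S \<subseteq> {1..m}"
  have SZ: "S \<inter> ZZ \<subseteq> {1..m}" using S by auto
  have "d_alpha p m \<alpha> S = Dm S" by (rule d_eq[OF S])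
  also have "\<dots> = Dm (S \<inter> ZZ)" by (rule claim1[OF S])
  also have "\<dots> = d_alpha p m \<alpha> (S \<inter> ZZ)" by (rule d_eq[OF SZ, symmetric])
  finally show "d_alpha p m \<alpha> S = d_alpha p m \<alpha> (S \<inter> Z_alpha p m \<alpha> r)" by (simp only: ZZ_def)
next
  fix Y assume "Y \<subseteq> {1..m}" "\<forall>S. S \<subseteq> {1..m} \<longrightarrow> d_alpha p m \<alpha> S = d_alpha p m \<alpha> (S \<inter> Y)"
  then show "Z_alpha p m \<alpha> r \<subseteq> Y" using claim2 ZZ_def by blast
next
  show "d_alpha p m \<alpha> (Z_alpha p m \<alpha> r) = m - h_alpha p m \<alpha> r"
    using d_eq[OF ZZm] claim3 unfolding ZZ_def hh_def by simp
next
  show "Z_alpha p m \<alpha> r \<subseteq> B_alpha p m \<alpha> r" using claim4 by (simp add: ZZ_def)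
qed

end

theorem lemma4:
  fixes p :: "nat \<Rightarrow> real" and m :: nat and \<alpha> :: real and r :: "nat \<Rightarrow> nat"
  assumes p01: "\<forall>j\<in>{1..m}. 0 \<le> p j \<and> p j \<le> 1"
    and alpha01: "0 \<le> \<alpha>" "\<alpha> \<le> 1"
    and sorted: "sorting_perm p m r"
  shows "(\<forall>S. S \<subseteq> {1..m} \<longrightarrow>
            d_alpha p m \<alpha> S = d_alpha p m \<alpha> (S \<inter> Z_alpha p m \<alpha> r))
       \<and> (\<forall>Y. Y \<subseteq> {1..m} \<longrightarrow>
            (\<forall>S. S \<subseteq> {1..m} \<longrightarrow> d_alpha p m \<alpha> S = d_alpha p m \<alpha> (S \<inter> Y)) \<longrightarrow>
            Z_alpha p m \<alpha> r \<subseteq> Y)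
       \<and> d_alpha p m \<alpha> (Z_alpha p m \<alpha> r) = m - h_alpha p m \<alpha> r
       \<and> Z_alpha p m \<alpha> r \<subseteq> B_alpha p m \<alpha> r"
proof -
  interpret sset p m \<alpha> r using assms by (simp add: sset_def)
  show ?thesis by (rule main)
qed

end
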